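(* For every $t\in I$, $\tau\in(0,T-t)$ and $x\in\mathbb{R}^n$, $Y(t,x)\subset\widetilde Y(\tau,t,x)+P$, where $\widetilde Y(\tau,t,x)=\bigcup_{u\in\mathcal{U}}\big(J(t,t+\tau,x,u)+V(t+\tau,x(t+\tau;t,x,u))\big)$.
   Context: Setting (MOC). Fix $T>0$, $I=[0,T]$, integers $n,m,p\ge1$, nonempty compact $U\subset\mathbb{R}^m$. $f:\mathbb{R}^n\times U\to\mathbb{R}^n$ continuous with $\|f(x_1,u)-f(x_2,u)\|\le K_f\|x_1-x_2\|$, $\|f(x,u)\|\le M_f$. $L:\mathbb{R}^n\times U\to\mathbb{R}^p$ continuous, bounded, Lipschitz in $x$ uniformly in $u$. Controls $\mathcal{U}$: bounded Lebesgue measurable $u:I\to U$. $x(s;t,x,u)$ solves $\dot x=f(x,u(s))$ on $[t,T]$, $x(t)=x$; $J(t,t',x,u)=\int_t^{t'}L(x(s;t,x,u),u(s))ds$; $Y(t,x)=\{J(t,T,x,u):u\in\mathcal{U}\}$. $P\subset\mathbb{R}^p$: closed convex pointed cone containing $0$ with nonempty interior; $\mathcal{E}(S,P)=\{y\in S:(y-P)\cap S=\{y\}\}$; $V(t,x)=\mathcal{E}(\mathrm{cl}\,Y(t,x),P)$. *)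

theory Defs
  imports "HOL-Analysis.Analysis"
begin

text \<open>Admissible controls: Lebesgue (Borel) measurable maps from I = [0,T] into U
  (boundedness is automatic since U is compact).\<close>
definition controls :: "real \<Rightarrow> ('m::euclidean_space) set \<Rightarrow> (real \<Rightarrow> 'm) set" where
  "controls T U = {u. (\<forall>s\<in>{0..T}. u s \<in> U) \<and> u \<in> borel_measurable (restrict_space lebesgue {0..T})}"

definition solves :: "real \<Rightarrow> ('n::euclidean_space \<Rightarrow> 'm \<Rightarrow> 'n) \<Rightarrow> real \<Rightarrow> 'n \<Rightarrow> (real \<Rightarrow> 'm) \<Rightarrow> (real \<Rightarrow> 'n) \<Rightarrow> bool" where
  "solves T f t x u y \<longleftrightarrow> continuous_on {t..T} y \<and>
     (\<lambda>r. f (y r) (u r)) integrable_on {t..T} \<and>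
     (\<forall>s\<in>{t..T}. y s = x + integral {t..s} (\<lambda>r. f (y r) (u r)))"

text \<open>The trajectory x(s;t,x,u) (extended by the constant x outside [t,T] to make it unique).\<close>
definition traj :: "real \<Rightarrow> ('n::euclidean_space \<Rightarrow> 'm \<Rightarrow> 'n) \<Rightarrow> real \<Rightarrow> 'n \<Rightarrow> (real \<Rightarrow> 'm) \<Rightarrow> real \<Rightarrow> 'n" where
  "traj T f t x u = (THE y. solves T f t x u y \<and> (\<forall>s. s \<notin> {t..T} \<longrightarrow> y s = x))"

definition cost :: "real \<Rightarrow> ('n::euclidean_space \<Rightarrow> 'm \<Rightarrow> 'n) \<Rightarrow> ('n \<Rightarrow> 'm \<Rightarrow> 'p::euclidean_space)
     \<Rightarrow> real \<Rightarrow> real \<Rightarrow> 'n \<Rightarrow> (real \<Rightarrow> 'm) \<Rightarrow> 'p" where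
  "cost T f L t t' x u = integral {t..t'} (\<lambda>s. L (traj T f t x u s) (u s))"

definition Yset :: "real \<Rightarrow> ('n::euclidean_space \<Rightarrow> 'm::euclidean_space \<Rightarrow> 'n) \<Rightarrow> ('n \<Rightarrow> 'm \<Rightarrow> 'p::euclidean_space)
     \<Rightarrow> 'm set \<Rightarrow> real \<Rightarrow> 'n \<Rightarrow> 'p set" where
  "Yset T f L U t x = {cost T f L t T x u | u. u \<in> controls T U}"

definition efficient :: "'p::euclidean_space set \<Rightarrow> 'p set \<Rightarrow> 'p set" where
  "efficient S P = {y \<in> S. ((\<lambda>q. y - q) ` P) \<inter> S = {y}}"

definition Vset :: "real \<Rightarrow> ('n::euclidean_space \<Rightarrow> 'm::euclidean_space \<Rightarrow> 'n) \<Rightarrow> ('n \<Rightarrow> 'm \<Rightarrow> 'p::euclidean_space)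
     \<Rightarrow> 'm set \<Rightarrow> 'p set \<Rightarrow> real \<Rightarrow> 'n \<Rightarrow> 'p set" where
  "Vset T f L U P t x = efficient (closure (Yset T f L U t x)) P"

definition Ytilde :: "real \<Rightarrow> ('n::euclidean_space \<Rightarrow> 'm::euclidean_space \<Rightarrow> 'n) \<Rightarrow> ('n \<Rightarrow> 'm \<Rightarrow> 'p::euclidean_space)
     \<Rightarrow> 'm set \<Rightarrow> 'p set \<Rightarrow> real \<Rightarrow> real \<Rightarrow> 'n \<Rightarrow> 'p set" where
  "Ytilde T f L U P \<tau> t x = (\<Union>u\<in>controls T U.
      (\<lambda>v. cost T f L t (t + \<tau>) x u + v) ` Vset T f L U P (t + \<tau>) (traj T f t x u (t + \<tau>)))"

end

theory Submission
  imports Defs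
begin

lemma integ_comp:
  fixes g :: "'n::euclidean_space \<Rightarrow> 'm::euclidean_space \<Rightarrow> 'p::euclidean_space"
  assumes cont: "continuous_on (UNIV \<times> U) (\<lambda>(x, v). g x v)"
    and bnd: "\<And>x v. v \<in> U \<Longrightarrow> norm (g x v) \<le> M"
    and u: "u \<in> controls T U" and ab: "{a..b} \<subseteq> {0..T}"
    and y: "continuous_on {a..b} y"
  shows "(\<lambda>r. g (y r) (u r)) integrable_on {a..b}"
proof -
  have um: "u \<in> borel_measurable (lebesgue_on {a..b})"
    using u ab unfolding controls_def by (auto intro: measurable_restrict_mono)
  have ym: "y \<in> borel_measurable (lebesgue_on {a..b})"
    by (rule continuous_imp_measurable_on_sets_lebesgue[OF y]) auto
  have pm: "(\<lambda>r. (y r, u r)) \<in> borel_measurable (lebesgue_on {a..b})"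
    by (rule borel_measurable_Pair[OF ym um])
  have pm2: "(\<lambda>r. (y r, u r)) \<in> lebesgue_on {a..b} \<rightarrow>\<^sub>M restrict_space borel (UNIV \<times> U)"
    apply (rule measurable_restrict_space2)
    using u ab pm unfolding controls_def by auto
  have gm: "(\<lambda>(x, v). g x v) \<in> borel_measurable (restrict_space borel (UNIV \<times> U))"
    by (rule borel_measurable_continuous_on_restrict[OF cont])
  have cm: "(\<lambda>r. g (y r) (u r)) \<in> borel_measurable (lebesgue_on {a..b})"
    using measurable_comp[OF pm2 gm] by (simp add: o_def)
  have "integrable (lebesgue_on {a..b}) (\<lambda>r. g (y r) (u r))"
  proof (rule finite_measure.integrable_const_bound[where B=M])
    show "finite_measure (lebesgue_on {a..b})" by (rule finite_measure_lebesgue_on) auto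
    show "AE x in lebesgue_on {a..b}. norm (g (y x) (u x)) \<le> M"
      using u ab unfolding controls_def by (auto intro!: AE_I2 bnd)
  qed (rule cm)
  then show ?thesis by (rule integrable_on_lebesgue_on) auto
qed

lemma cone_add:
  assumes "cone P" "convex P" "a \<in> P" "b \<in> P"
  shows "a + b \<in> P"
proof -
  have "(1/2) *\<^sub>R a + (1/2) *\<^sub>R b \<in> P"
    using assms(2-4) unfolding convex_def by auto
  then have "(2::real) *\<^sub>R ((1/2) *\<^sub>R a + (1/2) *\<^sub>R b) \<in> P"
    using assms(1) unfolding cone_def by auto
  then show ?thesis by (simp add: scaleR_add_right)
qed

lemma cone_sum:
  assumes "cone P" "convex P" "0 \<in> P" "finite S" "S \<subseteq> P" "\<And>v. v \<in> S \<Longrightarrow> c v \<ge> 0"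
  shows "(\<Sum>v\<in>S. c v *\<^sub>R v) \<in> P"
  using assms(4-6)
proof (induction S rule: finite_induct)
  case empty
  then show ?case using assms(3) by simp
next
  case (insert x F)
  have "c x *\<^sub>R x \<in> P" using insert.prems assms(1) unfolding cone_def by auto
  moreover have "(\<Sum>v\<in>F. c v *\<^sub>R v) \<in> P" using insert by auto
  ultimately show ?case using insert.hyps cone_add[OF assms(1,2)] by simp
qed

lemma pos_functional:
  fixes P :: "'a::euclidean_space set"
  assumes "closed P" "convex P" "cone P" "0 \<in> P" "P \<inter> uminus ` P = {0}"
  shows "\<exists>w. \<forall>q\<in>P. q \<noteq> 0 \<longrightarrow> w \<bullet> q > 0"
proof -
  define K where "K = P \<inter> sphere 0 1"
  have cK: "compact K" unfolding K_def using assms(1) by (simp add: closed_Int_compact)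
  define H where "H = convex hull K"
  have cH: "compact H" unfolding H_def using cK by (rule compact_convex_hull)
  have 0: "0 \<notin> H"
  proof
    assume "0 \<in> H"
    then obtain S c where S: "finite S" "S \<subseteq> K" "\<forall>x\<in>S. 0 \<le> c x" "sum c S = 1"
      "(\<Sum>v\<in>S. c v *\<^sub>R v) = 0"
      unfolding H_def convex_hull_explicit by auto
    obtain v0 where v0: "v0 \<in> S" "c v0 > 0"
    proof (rule ccontr)
      assume "\<not> thesis"
      with that have "\<forall>x\<in>S. c x = 0" using S(3) by force
      then have "sum c S = 0" by simp
      with S(4) show False by simp
    qed
    have SP: "S \<subseteq> P" using S(2) unfolding K_def by auto
    have "(\<Sum>v\<in>S - {v0}. c v *\<^sub>R v) \<in> P"
      using S SP by (intro cone_sum[OF assms(3,2,4)]) auto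
    moreover have "(\<Sum>v\<in>S. c v *\<^sub>R v) = c v0 *\<^sub>R v0 + (\<Sum>v\<in>S - {v0}. c v *\<^sub>R v)"
      using S(1) v0(1) by (simp add: sum.remove)
    ultimately have m: "- (c v0 *\<^sub>R v0) \<in> P" using S(5) by (simp add: add_eq_0_iff)
    have p: "c v0 *\<^sub>R v0 \<in> P" using v0 SP assms(3) unfolding cone_def by auto
    have "c v0 *\<^sub>R v0 \<in> uminus ` P" using m by (metis image_eqI minus_minus)
    with p assms(5) have "c v0 *\<^sub>R v0 = 0" by blast
    moreover have "norm v0 = 1" using v0 S(2) unfolding K_def by auto
    ultimately show False using v0(2) by auto
  qed
  obtain a b where ab: "a \<noteq> 0" "0 < b" "\<forall>x\<in>H. b < a \<bullet> x"
    using separating_hyperplane_closed_0[of H] cH 0 unfolding H_def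
    by (auto simp: convex_convex_hull compact_imp_closed)
  show ?thesis
  proof (intro exI ballI impI)
    fix q assume q: "q \<in> P" "q \<noteq> 0"
    have "(1 / norm q) *\<^sub>R q \<in> K"
      using q assms(3) unfolding K_def cone_def by auto
    then have "(1 / norm q) *\<^sub>R q \<in> H" unfolding H_def by (rule hull_inc)
    then have "0 < a \<bullet> ((1 / norm q) *\<^sub>R q)" using ab by force
    then show "0 < a \<bullet> q" using q by (simp add: zero_less_divide_iff)
  qed
qed

lemma domination:
  fixes P :: "'a::euclidean_space set"
  assumes "closed P" "convex P" "cone P" "0 \<in> P" "P \<inter> uminus ` P = {0}"
    and "compact S" "s \<in> S"
  shows "\<exists>e\<in>efficient S P. s - e \<in> P"
proof -
  obtain w where w: "\<And>q. q \<in> P \<Longrightarrow> q \<noteq> 0 \<Longrightarrow> w \<bullet> q > 0"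
    using pos_functional[OF assms(1-5)] by blast
  define C where "C = S \<inter> {e. s - e \<in> P}"
  have "closed {e. s - e \<in> P}"
    using continuous_closed_vimage[of P "\<lambda>e. s - e"] assms(1)
    by (auto intro: continuous_intros simp: vimage_def)
  then have cC: "compact C" unfolding C_def using assms(6) by (simp add: compact_Int_closed)
  have "s \<in> C" unfolding C_def using assms(7,4) by simp
  then obtain e where e: "e \<in> C" "\<And>y. y \<in> C \<Longrightarrow> w \<bullet> e \<le> w \<bullet> y"
  proof -
    have "continuous_on C (\<lambda>y. w \<bullet> y)" by (intro continuous_intros)
    then have "\<exists>x\<in>C. \<forall>y\<in>C. w \<bullet> x \<le> w \<bullet> y"
      using continuous_attains_inf[OF cC] \<open>s \<in> C\<close> by blast
    then show ?thesis using that by blast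
  qed
  have "e \<in> efficient S P"
    unfolding efficient_def
  proof (intro CollectI conjI equalityI subsetI)
    show "e \<in> S" using e unfolding C_def by auto
    fix e' assume "e' \<in> {e}"
    then show "e' \<in> (\<lambda>q. e - q) ` P \<inter> S" using assms(4) \<open>e \<in> S\<close> by force
  next
    fix e' assume "e' \<in> (\<lambda>q. e - q) ` P \<inter> S"
    then obtain q where q: "q \<in> P" "e' = e - q" "e' \<in> S" by auto
    have "s - e' = (s - e) + q" using q by simp
    also have "\<dots> \<in> P" using e(1) q(1) unfolding C_def by (auto intro: cone_add[OF assms(3,2)])
    finally have "e' \<in> C" unfolding C_def using q by auto
    then have "w \<bullet> e \<le> w \<bullet> e'" by (rule e(2))
    then have "w \<bullet> q \<le> 0" using q by (simp add: inner_diff_right)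
    then have "q = 0" using w[OF q(1)] by force
    then show "e' \<in> {e}" using q by simp
  qed
  then show ?thesis using e unfolding C_def by auto
qed

locale ode =
  fixes T :: real and U :: "'m::euclidean_space set" and f :: "'n::euclidean_space \<Rightarrow> 'm \<Rightarrow> 'n"
    and K Mf :: real and u :: "real \<Rightarrow> 'm" and t0 :: real and x0 :: 'n
  assumes cont: "continuous_on (UNIV \<times> U) (\<lambda>(x, v). f x v)"
    and lip: "\<And>x1 x2 v. v \<in> U \<Longrightarrow> norm (f x1 v - f x2 v) \<le> K * norm (x1 - x2)"
    and Kpos: "K > 0"
    and bnd: "\<And>x v. v \<in> U \<Longrightarrow> norm (f x v) \<le> Mf"
    and u: "u \<in> controls T U"
    and t0: "0 \<le> t0" "t0 \<le> T"
begin

definition cl :: "real \<Rightarrow> real" where "cl s = max t0 (min T s)"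
definition E :: "real \<Rightarrow> real" where "E s = exp (2 * K * (s - t0))"
definition h :: "(real \<Rightarrow> 'n) \<Rightarrow> real \<Rightarrow> 'n" where "h w r = f (E r *\<^sub>R w r) (u r)"
definition Phi :: "(real \<Rightarrow> 'n) \<Rightarrow> real \<Rightarrow> 'n" where
  "Phi w s = (1 / E (cl s)) *\<^sub>R (x0 + integral {t0..cl s} (h w))"
definition Psi :: "(real \<Rightarrow>\<^sub>C 'n) \<Rightarrow> (real \<Rightarrow>\<^sub>C 'n)" where
  "Psi w = Bcontfun (Phi (apply_bcontfun w))"

lemma cl_in: "cl s \<in> {t0..T}" using t0 by (auto simp: cl_def)
lemma cl_id: "s \<in> {t0..T} \<Longrightarrow> cl s = s" by (auto simp: cl_def)
lemma cl_cont: "continuous_on UNIV cl" unfolding cl_def by (intro continuous_intros)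
lemma E_pos: "E s > 0" by (simp add: E_def)
lemma E_cont: "continuous_on S E" unfolding E_def by (intro continuous_intros)
lemma uU: "r \<in> {t0..T} \<Longrightarrow> u r \<in> U" using u t0 unfolding controls_def by auto

lemma h_int:
  assumes "continuous_on {t0..T} w" "s \<in> {t0..T}"
  shows "h w integrable_on {t0..s}"
proof -
  have "continuous_on {t0..s} w" using assms by (auto intro: continuous_on_subset)
  then have "continuous_on {t0..s} (\<lambda>r. E r *\<^sub>R w r)"
    by (intro continuous_intros E_cont)
  then show ?thesis unfolding h_def[abs_def]
    using integ_comp[OF cont bnd u, of t0 s "\<lambda>r. E r *\<^sub>R w r"] assms(2) t0 by auto
qed

lemma F_cont:
  assumes "continuous_on {t0..T} w"
  shows "continuous_on {t0..T} (\<lambda>s. (1 / E s) *\<^sub>R (x0 + integral {t0..s} (h w)))"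
proof -
  have "continuous_on {t0..T} (\<lambda>s. integral {t0..s} (h w))"
    using h_int[OF assms, of T] t0 by (intro indefinite_integral_continuous_1) auto
  then show ?thesis using E_pos by (intro continuous_intros E_cont) (auto simp: less_imp_neq[symmetric])
qed

lemma Phi_bc:
  assumes "continuous_on {t0..T} w"
  shows "Phi w \<in> bcontfun"
proof -
  define F where "F = (\<lambda>s. (1 / E s) *\<^sub>R (x0 + integral {t0..s} (h w)))"
  have Fc: "continuous_on {t0..T} F" unfolding F_def by (rule F_cont[OF assms])
  have eq: "Phi w = (\<lambda>s. F (cl s))" unfolding F_def Phi_def by auto
  have "continuous_on UNIV (\<lambda>s. F (cl s))"
    by (rule continuous_on_compose2[OF Fc cl_cont]) (use cl_in in blast)
  moreover have "bounded (range (\<lambda>s. F (cl s)))"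
  proof -
    have "compact (F ` {t0..T})" using Fc by (intro compact_continuous_image) auto
    then have "bounded (F ` {t0..T})" by (rule compact_imp_bounded)
    then show ?thesis by (rule bounded_subset) (auto intro!: imageI cl_in)
  qed
  ultimately show ?thesis unfolding eq bcontfun_def by auto
qed

lemma Psi_apply: "apply_bcontfun (Psi w) = Phi (apply_bcontfun w)"
  unfolding Psi_def by (rule Bcontfun_inverse[OF Phi_bc]) auto

lemma E_integral:
  assumes "s \<in> {t0..T}"
  shows "((\<lambda>r. K * E r) has_integral (E s - 1) / 2) {t0..s}"
proof -
  have "((\<lambda>r. K * E r) has_integral (E s / 2 - E t0 / 2)) {t0..s}"
  proof (rule fundamental_theorem_of_calculus)
    show "t0 \<le> s" using assms by auto
    fix x assume "x \<in> {t0..s}"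
    have "((\<lambda>r. E r / 2) has_real_derivative K * E x) (at x within {t0..s})"
      unfolding E_def by (auto intro!: derivative_eq_intros)
    then show "((\<lambda>r. E r / 2) has_vector_derivative K * E x) (at x within {t0..s})"
      by (simp add: has_real_derivative_iff_has_vector_derivative)
  qed
  then show ?thesis by (simp add: E_def diff_divide_distrib)
qed

lemma contraction: "dist (Psi w1) (Psi w2) \<le> 1/2 * dist w1 w2"
proof (rule dist_bound)
  fix s
  define s' where "s' = cl s"
  define D where "D = dist w1 w2"
  have s': "s' \<in> {t0..T}" unfolding s'_def by (rule cl_in)
  have i1: "h w1 integrable_on {t0..s'}" by (rule h_int[OF _ s']) auto
  have i2: "h w2 integrable_on {t0..s'}" by (rule h_int[OF _ s']) auto
  have Eint: "((\<lambda>r. D * (K * E r)) has_integral D * ((E s' - 1) / 2)) {t0..s'}"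
    by (rule has_integral_mult_right[OF E_integral[OF s']])
  have "norm (integral {t0..s'} (\<lambda>r. h w1 r - h w2 r)) \<le> integral {t0..s'} (\<lambda>r. D * (K * E r))"
  proof (rule integral_norm_bound_integral)
    show "(\<lambda>r. h w1 r - h w2 r) integrable_on {t0..s'}" using i1 i2 by (rule integrable_diff)
    show "(\<lambda>r. D * (K * E r)) integrable_on {t0..s'}" using Eint by blast
    fix r assume r: "r \<in> {t0..s'}"
    then have "u r \<in> U" using s' by (intro uU) auto
    then have "norm (h w1 r - h w2 r) \<le> K * norm (E r *\<^sub>R w1 r - E r *\<^sub>R w2 r)"
      unfolding h_def by (rule lip)
    also have "\<dots> = K * E r * norm (w1 r - w2 r)"
      using E_pos[of r] by (simp add: scaleR_diff_right[symmetric])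
    also have "\<dots> \<le> K * E r * D"
      unfolding D_def using dist_bounded[of w1 r w2] Kpos E_pos[of r]
      by (intro mult_left_mono) (auto simp: dist_norm)
    finally show "norm (h w1 r - h w2 r) \<le> D * (K * E r)" by (simp add: algebra_simps)
  qed
  also have "\<dots> = D * ((E s' - 1) / 2)" using Eint by blast
  finally have nb: "norm (integral {t0..s'} (\<lambda>r. h w1 r - h w2 r)) \<le> D * ((E s' - 1) / 2)" .
  have "dist (Psi w1 s) (Psi w2 s) = norm (Phi w1 s - Phi w2 s)"
    by (simp add: Psi_apply dist_norm)
  also have "Phi w1 s - Phi w2 s = (1 / E s') *\<^sub>R integral {t0..s'} (\<lambda>r. h w1 r - h w2 r)"
    unfolding Phi_def s'_def[symmetric] using integral_diff[OF i1 i2]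
    by (simp add: scaleR_diff_right[symmetric])
  also have "norm \<dots> = (1 / E s') * norm (integral {t0..s'} (\<lambda>r. h w1 r - h w2 r))"
    using E_pos[of s'] by simp
  also have "\<dots> \<le> (1 / E s') * (D * ((E s' - 1) / 2))"
    using nb E_pos[of s'] by (intro mult_left_mono) auto
  also have "\<dots> \<le> 1/2 * D"
  proof -
    have "D \<ge> 0" unfolding D_def by simp
    have "(1 / E s') * (D * ((E s' - 1) / 2)) = D / 2 - D / (2 * E s')"
      using E_pos[of s'] by (simp add: field_simps)
    also have "\<dots> \<le> D / 2" using \<open>D \<ge> 0\<close> E_pos[of s'] by simp
    finally show ?thesis by simp
  qed
  finally show "dist (Psi w1 s) (Psi w2 s) \<le> 1/2 * dist w1 w2" unfolding D_def .
qed


lemma fix_ex1: "\<exists>!w. Psi w = w"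
  by (rule banach_fix_type[of "1/2"]) (auto intro!: contraction[simplified])

lemma clamp_bc:
  assumes Gc: "continuous_on {t0..T} G"
  shows "(\<lambda>s. G (cl s)) \<in> bcontfun"
proof -
  have "continuous_on UNIV (\<lambda>s. G (cl s))"
    by (rule continuous_on_compose2[OF Gc cl_cont]) (use cl_in in blast)
  moreover have "bounded (range (\<lambda>s. G (cl s)))"
  proof -
    have "compact (G ` {t0..T})" using Gc by (intro compact_continuous_image) auto
    then have "bounded (G ` {t0..T})" by (rule compact_imp_bounded)
    then show ?thesis by (rule bounded_subset) (auto intro!: imageI cl_in)
  qed
  ultimately show ?thesis unfolding bcontfun_def by auto
qed

lemma sol_fix:
  assumes sol: "solves T f t0 x0 u y"
  defines "W \<equiv> (\<lambda>s. (1 / E (cl s)) *\<^sub>R y (cl s))"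
  shows "W \<in> bcontfun" "Psi (Bcontfun W) = Bcontfun W"
proof -
  have yc: "continuous_on {t0..T} y" using sol unfolding solves_def by auto
  have Gc: "continuous_on {t0..T} (\<lambda>s. (1 / E s) *\<^sub>R y s)"
    using E_pos by (intro continuous_intros E_cont yc) (auto simp: less_imp_neq[symmetric])
  show Wb: "W \<in> bcontfun" unfolding W_def by (rule clamp_bc[OF Gc])
  have "Phi W = W"
  proof
    fix s
    define s' where "s' = cl s"
    have s': "s' \<in> {t0..T}" unfolding s'_def by (rule cl_in)
    have "integral {t0..s'} (h W) = integral {t0..s'} (\<lambda>r. f (y r) (u r))"
    proof (rule integral_cong)
      fix r assume "r \<in> {t0..s'}"
      then have "cl r = r" using s' by (intro cl_id) auto
      then show "h W r = f (y r) (u r)" unfolding h_def W_def using E_pos[of r] by simp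
    qed
    also have "x0 + \<dots> = y s'" using sol s' unfolding solves_def by auto
    finally show "Phi W s = W s" unfolding Phi_def W_def s'_def[symmetric] by simp
  qed
  then show "Psi (Bcontfun W) = Bcontfun W"
    unfolding Psi_def using Bcontfun_inverse[OF Wb] by simp
qed

lemma ex_unique: "\<exists>!y. solves T f t0 x0 u y \<and> (\<forall>s. s \<notin> {t0..T} \<longrightarrow> y s = x0)"
proof (rule ex_ex1I)
  obtain w where fx: "Psi w = w" using fix_ex1 by blast
  define Y where "Y s = (if s \<in> {t0..T} then E s *\<^sub>R apply_bcontfun w s else x0)" for s
  have Yeq: "Y s = x0 + integral {t0..s} (h w)" if s: "s \<in> {t0..T}" for s
  proof -
    have "apply_bcontfun w s = Phi w s" using fx Psi_apply[of w] by simp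
    also have "\<dots> = (1 / E s) *\<^sub>R (x0 + integral {t0..s} (h w))" unfolding Phi_def using cl_id[OF s] by simp
    finally show ?thesis unfolding Y_def using s E_pos[of s] by simp
  qed
  have hY: "f (Y r) (u r) = h w r" if "r \<in> {t0..T}" for r
    using that by (simp add: Y_def h_def)
  have "solves T f t0 x0 u Y"
    unfolding solves_def
  proof (intro conjI ballI)
    have "continuous_on {t0..T} (\<lambda>s. E s *\<^sub>R apply_bcontfun w s)" by (intro continuous_intros E_cont) auto
    then show "continuous_on {t0..T} Y" by (rule continuous_on_eq) (auto simp: Y_def)
    have "h w integrable_on {t0..T}" using t0 by (intro h_int) auto
    then show "(\<lambda>r. f (Y r) (u r)) integrable_on {t0..T}"
      by (rule integrable_eq) (simp add: hY)
    fix s assume s: "s \<in> {t0..T}"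
    have "integral {t0..s} (\<lambda>r. f (Y r) (u r)) = integral {t0..s} (h w)"
      using s by (intro integral_cong) (auto simp: hY)
    then show "Y s = x0 + integral {t0..s} (\<lambda>r. f (Y r) (u r))" using Yeq[OF s] by simp
  qed
  moreover have "\<forall>s. s \<notin> {t0..T} \<longrightarrow> Y s = x0" by (simp add: Y_def)
  ultimately show "\<exists>y. solves T f t0 x0 u y \<and> (\<forall>s. s \<notin> {t0..T} \<longrightarrow> y s = x0)" by blast
next
  fix y1 y2
  assume A: "solves T f t0 x0 u y1 \<and> (\<forall>s. s \<notin> {t0..T} \<longrightarrow> y1 s = x0)"
     and B: "solves T f t0 x0 u y2 \<and> (\<forall>s. s \<notin> {t0..T} \<longrightarrow> y2 s = x0)"
  define W1 where "W1 = (\<lambda>s. (1 / E (cl s)) *\<^sub>R y1 (cl s))"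
  define W2 where "W2 = (\<lambda>s. (1 / E (cl s)) *\<^sub>R y2 (cl s))"
  have f1: "W1 \<in> bcontfun" "Psi (Bcontfun W1) = Bcontfun W1" using sol_fix[of y1] A unfolding W1_def by auto
  have f2: "W2 \<in> bcontfun" "Psi (Bcontfun W2) = Bcontfun W2" using sol_fix[of y2] B unfolding W2_def by auto
  have uq: "\<And>a b. Psi a = a \<Longrightarrow> Psi b = b \<Longrightarrow> a = b" using fix_ex1 by auto
  have "Bcontfun W1 = Bcontfun W2" using uq f1(2) f2(2) by simp
  then have W: "W1 = W2" using Bcontfun_inject[OF f1(1) f2(1)] by simp
  show "y1 = y2"
  proof
    fix s
    show "y1 s = y2 s"
    proof (cases "s \<in> {t0..T}")
      case True
      have "W1 s = W2 s" using W by simp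
      then show ?thesis using True cl_id[OF True] E_pos[of s] unfolding W1_def W2_def by simp
    next
      case False
      then show ?thesis using A B by auto
    qed
  qed
qed

lemma traj_both: "solves T f t0 x0 u (traj T f t0 x0 u) \<and> (\<forall>s. s \<notin> {t0..T} \<longrightarrow> traj T f t0 x0 u s = x0)"
  unfolding traj_def by (rule theI'[OF ex_unique])

lemma traj_sol: "solves T f t0 x0 u (traj T f t0 x0 u)"
  using traj_both by blast

lemma traj_out: "s \<notin> {t0..T} \<Longrightarrow> traj T f t0 x0 u s = x0"
  using traj_both by blast

lemma traj_uniq:
  assumes "solves T f t0 x0 u y" "\<forall>s. s \<notin> {t0..T} \<longrightarrow> y s = x0"
  shows "y = traj T f t0 x0 u"
proof -
  have "(THE y. solves T f t0 x0 u y \<and> (\<forall>s. s \<notin> {t0..T} \<longrightarrow> y s = x0)) = y"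
    using assms by (intro the1_equality[OF ex_unique]) blast
  then show ?thesis unfolding traj_def by simp
qed

end

theorem lemma5p3:
  fixes T Kf Mf K_L M_L :: real
    and U :: "(real ^ 'm) set"
    and f :: "real ^ 'n \<Rightarrow> real ^ 'm \<Rightarrow> real ^ 'n"
    and L :: "real ^ 'n \<Rightarrow> real ^ 'm \<Rightarrow> real ^ 'p"
    and P :: "(real ^ 'p) set"
  assumes "T > 0"
    and "U \<noteq> {}" and "compact U"
    and "continuous_on (UNIV \<times> U) (\<lambda>(x, v). f x v)"
    and "\<And>x1 x2 v. v \<in> U \<Longrightarrow> norm (f x1 v - f x2 v) \<le> Kf * norm (x1 - x2)"
    and "\<And>x v. v \<in> U \<Longrightarrow> norm (f x v) \<le> Mf"
    and "continuous_on (UNIV \<times> U) (\<lambda>(x, v). L x v)"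
    and "\<And>x v. v \<in> U \<Longrightarrow> norm (L x v) \<le> M_L"
    and "\<And>x1 x2 v. v \<in> U \<Longrightarrow> norm (L x1 v - L x2 v) \<le> K_L * norm (x1 - x2)"
    and "closed P" and "convex P" and "cone P" and "0 \<in> P"
    and "P \<inter> uminus ` P = {0}"
    and "interior P \<noteq> {}"
    and "t \<in> {0..T}" and "\<tau> \<in> {0<..<T - t}"
  shows "Yset T f L U t x \<subseteq>
           {a + q | a q. a \<in> Ytilde T f L U P \<tau> t x \<and> q \<in> P}"
proof
  fix y assume "y \<in> Yset T f L U t x"
  then obtain u where u: "u \<in> controls T U" and y: "y = cost T f L t T x u"
    unfolding Yset_def by auto
  define K where "K = \<bar>Kf\<bar> + 1"
  have lipK: "norm (f x1 v - f x2 v) \<le> K * norm (x1 - x2)" if "v \<in> U" for x1 x2 v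
  proof -
    have "norm (f x1 v - f x2 v) \<le> Kf * norm (x1 - x2)" using assms(5) that .
    also have "\<dots> \<le> K * norm (x1 - x2)" unfolding K_def by (intro mult_right_mono) auto
    finally show ?thesis .
  qed
  have Kpos: "K > 0" unfolding K_def by simp
  have t: "0 \<le> t" "t \<le> T" using assms(16) by auto
  have tau: "0 < \<tau>" "t + \<tau> < T" using assms(17) by auto
  define s0 where "s0 = t + \<tau>"
  have s0: "0 \<le> s0" "s0 \<le> T" "t \<le> s0" using t tau unfolding s0_def by auto
  interpret o1: ode T U f K Mf u t x
    by unfold_locales (use assms(4,6) lipK Kpos u t in auto)
  define Y1 where "Y1 = traj T f t x u"
  define z where "z = Y1 s0"
  interpret o2: ode T U f K Mf u s0 z
    by unfold_locales (use assms(4,6) lipK Kpos u s0 in auto)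
  have sol1: "solves T f t x u Y1" unfolding Y1_def by (rule o1.traj_sol)
  have Y1c: "continuous_on {t..T} Y1" using sol1 unfolding solves_def by auto
  have g1i: "(\<lambda>r. f (Y1 r) (u r)) integrable_on {t..T}" using sol1 unfolding solves_def by auto
  define Y2 where "Y2 s = (if s \<in> {s0..T} then Y1 s else z)" for s
  have sol2: "solves T f s0 z u Y2"
    unfolding solves_def
  proof (intro conjI ballI)
    have "continuous_on {s0..T} Y1" using s0 by (intro continuous_on_subset[OF Y1c]) auto
    then show c2: "continuous_on {s0..T} Y2" by (rule continuous_on_eq) (auto simp: Y2_def)
    show "(\<lambda>r. f (Y2 r) (u r)) integrable_on {s0..T}"
      by (rule integ_comp[OF assms(4,6) u _ c2]) (use s0 in auto)
    fix s assume s: "s \<in> {s0..T}"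
    have i: "(\<lambda>r. f (Y1 r) (u r)) integrable_on {t..s}"
      using s s0 by (intro integrable_on_subinterval[OF g1i]) auto
    have "Y2 s = x + integral {t..s} (\<lambda>r. f (Y1 r) (u r))"
      using sol1 s s0 unfolding solves_def Y2_def by auto
    also have "integral {t..s} (\<lambda>r. f (Y1 r) (u r)) =
        integral {t..s0} (\<lambda>r. f (Y1 r) (u r)) + integral {s0..s} (\<lambda>r. f (Y1 r) (u r))"
      using Henstock_Kurzweil_Integration.integral_combine[OF _ _ i, of s0] s s0 by auto
    also have "integral {s0..s} (\<lambda>r. f (Y1 r) (u r)) = integral {s0..s} (\<lambda>r. f (Y2 r) (u r))"
      using s by (intro integral_cong) (auto simp: Y2_def)
    finally have "Y2 s = x + (integral {t..s0} (\<lambda>r. f (Y1 r) (u r)) + integral {s0..s} (\<lambda>r. f (Y2 r) (u r)))" .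
    moreover have "x + integral {t..s0} (\<lambda>r. f (Y1 r) (u r)) = z"
      using sol1 s0 unfolding solves_def z_def by auto
    ultimately show "Y2 s = z + integral {s0..s} (\<lambda>r. f (Y2 r) (u r))" by (simp add: add.assoc)
  qed
  have Y2eq: "Y2 = traj T f s0 z u"
    by (rule o2.traj_uniq[OF sol2]) (auto simp: Y2_def)
  have Li: "(\<lambda>r. L (Y1 r) (u r)) integrable_on {t..T}"
    by (rule integ_comp[OF assms(7,8) u _ Y1c]) (use t in auto)
  define c1 where "c1 = cost T f L t s0 x u"
  define y2 where "y2 = cost T f L s0 T z u"
  have ysplit: "y = c1 + y2"
  proof -
    have "y = integral {t..T} (\<lambda>r. L (Y1 r) (u r))" unfolding y cost_def Y1_def ..
    also have "\<dots> = integral {t..s0} (\<lambda>r. L (Y1 r) (u r)) + integral {s0..T} (\<lambda>r. L (Y1 r) (u r))"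
      using Henstock_Kurzweil_Integration.integral_combine[OF _ _ Li, of s0] s0 by auto
    also have "integral {s0..T} (\<lambda>r. L (Y1 r) (u r)) = y2"
      unfolding y2_def cost_def Y2eq[symmetric] by (intro integral_cong) (auto simp: Y2_def)
    finally show ?thesis unfolding c1_def cost_def Y1_def .
  qed
  define S where "S = closure (Yset T f L U s0 z)"
  have y2S: "y2 \<in> S" unfolding S_def y2_def Yset_def using u by (auto intro: closure_subset[THEN subsetD])
  have "bounded (Yset T f L U s0 z)"
  proof -
    have "norm w \<le> \<bar>M_L\<bar> * (T - s0)" if wY: "w \<in> Yset T f L U s0 z" for w
    proof -
      obtain u' where u': "u' \<in> controls T U" "w = cost T f L s0 T z u'"
        using wY unfolding Yset_def by auto
      define G where "G = (\<lambda>r. L (traj T f s0 z u' r) (u' r))"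
      have Gb: "\<forall>r\<in>{s0..T}. norm (G r) \<le> \<bar>M_L\<bar>"
      proof
        fix r assume "r \<in> {s0..T}"
        then have "u' r \<in> U" using u' s0 unfolding controls_def by auto
        then show "norm (G r) \<le> \<bar>M_L\<bar>" unfolding G_def using assms(8)[of "u' r" "traj T f s0 z u' r"] by linarith
      qed
      show ?thesis
      proof (cases "G integrable_on {s0..T}")
        case True
        then have "(G has_integral w) {s0..T}" using u' unfolding cost_def G_def
          by (simp add: integrable_integral)
        then show ?thesis using has_integral_bound_real[of "\<bar>M_L\<bar>" "{}" G w s0 T] Gb s0 by (simp add: content_real)
      next
        case False
        then have "w = 0" using u' unfolding cost_def G_def by (simp add: not_integrable_integral)
        then show ?thesis using s0 by simp
      qed
    qed
    then show ?thesis unfolding bounded_iff by blast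
  qed
  then have cS: "compact S" unfolding S_def by (simp add: compact_closure)
  obtain e where e: "e \<in> efficient S P" "y2 - e \<in> P"
    using domination[OF assms(10-14) cS y2S] by blast
  have "c1 + e \<in> Ytilde T f L U P \<tau> t x"
    unfolding Ytilde_def using u e(1)
    by (auto simp: Vset_def S_def z_def Y1_def s0_def c1_def)
  moreover have "y = (c1 + e) + (y2 - e)" using ysplit by simp
  ultimately show "y \<in> {a + q | a q. a \<in> Ytilde T f L U P \<tau> t x \<and> q \<in> P}"
    using e(2) by blast
qed

end
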